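(* In the LCD setting of the context, with generic parameters, fix a context $k$ whose intervention target is node $k$, and let $D^{(k)}\in\mathbb{R}^{q\times q}$ be diagonal with $D^{(k)}_{j,j}\in\{1,-1\}$ for $j\neq k$ and $D^{(k)}_{k,k}\notin\{0,1,-1\}$. For $j_1,j_2\in\mathrm{an}(k)$, there exists $\alpha\in\mathbb{R}$ such that $$(I-\Lambda^{(0)})^{-1}_{i,j_1}-\big((I-\Lambda^{(k)})^{-1}D^{(k)}\big)_{i,j_2}=\alpha\Big((I-\Lambda^{(0)})^{-1}_{i,k}-\big((I-\Lambda^{(k)})^{-1}D^{(k)}\big)_{i,k}\Big)$$ for all $i\in[q]$ if and only if $j_1=j_2$ and $D^{(k)}_{j_1,j_1}=1$.
   Context: LCD setting: $\Lambda^{(0)}\in\mathbb{R}^{q\times q}$ with $\lambda^{(0)}_{i,j}\ne0$ iff $j\to i$ is an edge of a DAG $\mathcal{G}$ on $[q]$, with generic nonzero entries; $\Lambda^{(k)}$ agrees with $\Lambda^{(0)}$ except in row $k$, which is either zero (perfect intervention) or has generic entries with $\lambda^{(k)}_{k,j}\ne\lambda^{(0)}_{k,j}$ whenever $\lambda^{(0)}_{k,j}\ne0$ (soft intervention). $\mathrm{an}(k)$ is the set of ancestors of $k$ in $\mathcal{G}$ (nodes $m\ne k$ with a directed path $m\to\cdots\to k$). *)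

theory Defs
  imports "HOL-Analysis.Analysis"
begin

text \<open>Nodes of the DAG are the elements of a finite type 'n (so q = CARD('n)).
  The graph is an edge set E; (j,i) \<in> E means the edge j \<rightarrow> i.\<close>

definition ancestors :: "('n \<times> 'n) set \<Rightarrow> 'n \<Rightarrow> 'n set" where
  "ancestors E k = {m. m \<noteq> k \<and> (m, k) \<in> E\<^sup>+}"

text \<open>Free parameters: Inl (j,i) for each edge j \<rightarrow> i (entries of Lambda^(0)),
  Inr j for each parent j of k (entries of the intervened row k in a soft intervention).\<close>

definition param_index :: "('n \<times> 'n) set \<Rightarrow> 'n \<Rightarrow> (('n \<times> 'n) + 'n) set" where
  "param_index E k = Inl ` E \<union> Inr ` {j. (j, k) \<in> E}"

definition Lam0 :: "('n \<times> 'n) set \<Rightarrow> (('n \<times> 'n) + 'n \<Rightarrow> real) \<Rightarrow> real^'n^'n" where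
  "Lam0 E \<theta> = (\<chi> i j. if (j, i) \<in> E then \<theta> (Inl (j, i)) else 0)"

definition Lamk :: "('n \<times> 'n) set \<Rightarrow> bool \<Rightarrow> 'n \<Rightarrow> (('n \<times> 'n) + 'n \<Rightarrow> real) \<Rightarrow> real^'n^'n" where
  "Lamk E perfect k \<theta> = (\<chi> i j. if i = k then
       (if perfect then 0 else if (j, k) \<in> E then \<theta> (Inr j) else 0)
     else Lam0 E \<theta> $ i $ j)"

end

theory Submission
  imports Defs
begin

lemma minv_props:
  fixes A :: "real^'n::finite^'n"
  assumes "invertible A"
  shows "A ** matrix_inv A = mat 1" "matrix_inv A ** A = mat 1"
  using someI_ex[OF assms[unfolded invertible_def]] unfolding matrix_inv_def by auto

lemma acyc_inv:
  fixes L :: "real^'n::finite^'n" and E :: "('n \<times> 'n) set"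
  assumes ac: "acyclic E" and supp: "\<And>i j. L$i$j \<noteq> 0 \<Longrightarrow> (j,i) \<in> E"
  shows "invertible (mat 1 - L)"
    and "\<And>i j. matrix_inv (mat 1 - L) $ i $ j \<noteq> 0 \<Longrightarrow> (j,i) \<in> E\<^sup>*"
    and "\<And>j. matrix_inv (mat 1 - L) $ j $ j = 1"
proof -
  have wf: "wf E" using finite_acyclic_wf[OF _ ac] by simp
  have inj: "inj ((*v) (mat 1 - L))"
  proof (rule injI)
    fix x y :: "real^'n"
    assume "(mat 1 - L) *v x = (mat 1 - L) *v y"
    then have h0: "(mat 1 - L) *v (x - y) = 0"
      by (simp add: matrix_vector_mult_diff_distrib)
    define z where "z = x - y"
    have hz: "\<And>i. z$i - (\<Sum>j\<in>UNIV. L$i$j * z$j) = 0"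
    proof -
      fix i
      have "((mat 1 - L) *v z) $ i = 0" using h0 z_def by simp
      then show "z$i - (\<Sum>j\<in>UNIV. L$i$j * z$j) = 0"
        by (simp add: matrix_vector_mult_def mat_def sum_subtractf left_diff_distrib
            if_distrib[of "\<lambda>t. t * _"] cong: if_cong)
    qed
    have "\<forall>i. z$i = 0"
    proof
      fix i show "z$i = 0"
      proof (induction i rule: wf_induct[OF wf])
        case (1 i)
        have "(\<Sum>j\<in>UNIV. L$i$j * z$j) = 0"
        proof (rule sum.neutral, rule ballI)
          fix j assume "j \<in> (UNIV::'n set)"
          show "L$i$j * z$j = 0"
          proof (cases "L$i$j = 0")
            case False
            then have "(j,i) \<in> E" by (rule supp)
            then show ?thesis using 1 by simp
          qed simp
        qed
        then show ?case using hz[of i] by linarith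
      qed
    qed
    then have "z = 0" by (simp add: vec_eq_iff)
    then show "x = y" using z_def by simp
  qed
  show inv: "invertible (mat 1 - L)"
    unfolding invertible_left_inverse matrix_left_invertible_injective by (rule inj)
  define B where "B = matrix_inv (mat 1 - L)"
  have MB: "(mat 1 - L) ** B = mat 1" using minv_props(1)[OF inv] B_def by simp
  have hB: "\<And>i j. B$i$j - (\<Sum>b\<in>UNIV. L$i$b * B$b$j) = (if i = j then 1 else 0)"
  proof -
    fix i j
    have "((mat 1 - L) ** B) $ i $ j = (if i = j then 1 else 0)" using MB by (simp add: mat_def)
    then show "B$i$j - (\<Sum>b\<in>UNIV. L$i$b * B$b$j) = (if i = j then 1 else 0)"
      by (simp add: matrix_matrix_mult_def mat_def sum_subtractf left_diff_distrib
            if_distrib[of "\<lambda>t. t * _"] cong: if_cong)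
  qed
  have sB: "\<And>i j. B$i$j \<noteq> 0 \<Longrightarrow> (j,i) \<in> E\<^sup>*"
  proof -
    fix i j show "B$i$j \<noteq> 0 \<Longrightarrow> (j,i) \<in> E\<^sup>*"
    proof (induction i rule: wf_induct[OF wf])
      case (1 i)
      show ?case
      proof (cases "i = j")
        case True then show ?thesis by simp
      next
        case False
        then have "(\<Sum>b\<in>UNIV. L$i$b * B$b$j) \<noteq> 0" using hB[of i j] 1(2) False by auto
        then obtain b where "L$i$b * B$b$j \<noteq> 0" by (meson sum.not_neutral_contains_not_neutral)
        then have "(b,i) \<in> E" "(j,b) \<in> E\<^sup>*" using supp 1(1) by auto
        then show ?thesis by (meson rtrancl.rtrancl_into_rtrancl)
      qed
    qed
  qed
  then show "\<And>i j. matrix_inv (mat 1 - L) $ i $ j \<noteq> 0 \<Longrightarrow> (j,i) \<in> E\<^sup>*" using B_def by simp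
  show "\<And>j. matrix_inv (mat 1 - L) $ j $ j = 1"
  proof -
    fix j
    have "(\<Sum>b\<in>UNIV. L$j$b * B$b$j) = 0"
    proof (rule sum.neutral, rule ballI, rule ccontr)
      fix b assume "L$j$b * B$b$j \<noteq> 0"
      then have "(b,j) \<in> E" "(j,b) \<in> E\<^sup>*" using supp sB by auto
      then have "(j,j) \<in> E\<^sup>+" by (meson rtrancl_into_trancl1)
      then show False using ac unfolding acyclic_def by blast
    qed
    then show "matrix_inv (mat 1 - L) $ j $ j = 1" using hB[of j j] unfolding B_def by simp
  qed
qed

lemma mul_diag:
  fixes A D :: "real^'n::finite^'n"
  assumes "\<forall>i j. i \<noteq> j \<longrightarrow> D $ i $ j = 0"
  shows "(A ** D) $ i $ j = A $ i $ j * D $ j $ j"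
proof -
  have "(A ** D) $ i $ j = (\<Sum>b\<in>UNIV. A$i$b * D$b$j)" by (simp add: matrix_matrix_mult_def)
  also have "\<dots> = A $ i $ j * D $ j $ j"
    by (subst sum.remove[of _ j]) (use assms in \<open>auto intro!: sum.neutral\<close>)
  finally show ?thesis .
qed

lemma sub_row:
  fixes P Q N :: "real^'n::finite^'n"
  assumes "\<And>a b. a \<noteq> k \<Longrightarrow> N $ a $ b = 0"
  shows "(P ** N ** Q) $ i $ j = P $ i $ k * (N ** Q) $ k $ j"
proof -
  have z: "\<And>a. a \<noteq> k \<Longrightarrow> (N ** Q) $ a $ j = 0"
    using assms by (simp add: matrix_matrix_mult_def)
  have "(P ** N ** Q) $ i $ j = (P ** (N ** Q)) $ i $ j" by (simp add: matrix_mul_assoc)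
  also have "\<dots> = (\<Sum>a\<in>UNIV. P$i$a * (N ** Q)$a$j)" by (simp add: matrix_matrix_mult_def)
  also have "\<dots> = P $ i $ k * (N ** Q) $ k $ j"
    by (subst sum.remove[of _ k]) (use z in \<open>auto intro!: sum.neutral\<close>)
  finally show ?thesis .
qed

lemma mm_sub_l:
  fixes A B C :: "real^'n::finite^'n"
  shows "A ** (B - C) = A ** B - A ** C"
  by (simp add: matrix_matrix_mult_def vec_eq_iff sum_subtractf right_diff_distrib)

lemma mm_sub_r:
  fixes A B C :: "real^'n::finite^'n"
  shows "(B - C) ** A = B ** A - C ** A"
  by (simp add: matrix_matrix_mult_def vec_eq_iff sum_subtractf left_diff_distrib)

theorem proposition2p9:
  fixes E :: "('n::finite \<times> 'n) set" and k :: 'n and D :: "real^'n^'n" and perfect :: bool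
  assumes "acyclic E"
    and "\<forall>i j. i \<noteq> j \<longrightarrow> D $ i $ j = 0"
    and "\<forall>j. j \<noteq> k \<longrightarrow> D $ j $ j \<in> {1, -1}"
    and "D $ k $ k \<notin> {0, 1, -1}"
  shows "AE \<theta> in PiM (param_index E k) (\<lambda>_. lborel).
    \<forall>j1\<in>ancestors E k. \<forall>j2\<in>ancestors E k.
      (\<exists>\<alpha>::real. \<forall>i.
          matrix_inv (mat 1 - Lam0 E \<theta>) $ i $ j1
            - (matrix_inv (mat 1 - Lamk E perfect k \<theta>) ** D) $ i $ j2
        = \<alpha> * (matrix_inv (mat 1 - Lam0 E \<theta>) $ i $ k
            - (matrix_inv (mat 1 - Lamk E perfect k \<theta>) ** D) $ i $ k))
      \<longleftrightarrow> (j1 = j2 \<and> D $ j1 $ j1 = 1)"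
proof (rule AE_I2, intro ballI)
  fix \<theta> j1 j2
  assume j1: "j1 \<in> ancestors E k" and j2: "j2 \<in> ancestors E k"
  define L0 where "L0 = Lam0 E \<theta>"
  define Lk where "Lk = Lamk E perfect k \<theta>"
  define P where "P = matrix_inv (mat 1 - L0)"
  define Q where "Q = matrix_inv (mat 1 - Lk)"
  define N where "N = (mat 1 - Lk) - (mat 1 - L0)"
  have ac: "\<And>x. (x,x) \<notin> E\<^sup>+" using assms(1) unfolding acyclic_def by blast
  have supp0: "\<And>i j. L0$i$j \<noteq> 0 \<Longrightarrow> (j,i) \<in> E"
    by (simp add: L0_def Lam0_def split: if_splits)
  have suppk: "\<And>i j. Lk$i$j \<noteq> 0 \<Longrightarrow> (j,i) \<in> E"
    by (simp add: Lk_def Lamk_def Lam0_def split: if_splits)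
  note inv0 = acyc_inv[where L=L0 and E=E, OF assms(1) supp0, folded P_def]
  note invk = acyc_inv[where L=Lk and E=E, OF assms(1) suppk, folded Q_def]
  have PQ: "P ** N ** Q = P - Q"
  proof -
    have "P ** N ** Q = (P ** (mat 1 - Lk) - P ** (mat 1 - L0)) ** Q"
      by (simp add: N_def mm_sub_l)
    also have "\<dots> = (P ** (mat 1 - Lk) - mat 1) ** Q"
      using minv_props(2)[OF inv0(1)] P_def by simp
    also have "\<dots> = P ** ((mat 1 - Lk) ** Q) - Q"
      by (simp add: mm_sub_r matrix_mul_assoc[symmetric])
    also have "\<dots> = P - Q"
      using minv_props(1)[OF invk(1)] Q_def by simp
    finally show ?thesis .
  qed
  have Nrow: "\<And>a b. a \<noteq> k \<Longrightarrow> N $ a $ b = 0"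
    by (simp add: N_def Lk_def L0_def Lamk_def)
  define w where "w j = (N ** Q) $ k $ j" for j
  have key: "\<And>i j. P$i$j - Q$i$j = P$i$k * w j"
    using sub_row[OF Nrow, where P=P and Q=Q] PQ unfolding w_def by (metis vector_minus_component)
  have wk: "w k = 0"
  proof -
    have "w k = (\<Sum>b\<in>UNIV. N$k$b * Q$b$k)" by (simp add: w_def matrix_matrix_mult_def)
    also have "\<dots> = 0"
    proof (rule sum.neutral, rule ballI, rule ccontr)
      fix b assume nz: "N$k$b * Q$b$k \<noteq> 0"
      have "N$k$b = L0$k$b - Lk$k$b" by (simp add: N_def)
      then have "L0$k$b \<noteq> 0 \<or> Lk$k$b \<noteq> 0" using nz by auto
      then have "(b,k) \<in> E" using supp0 suppk by blast
      moreover have "(k,b) \<in> E\<^sup>*" using nz invk(2) by fastforce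
      ultimately have "(k,k) \<in> E\<^sup>+" by (meson rtrancl_into_trancl1)
      then show False using ac by blast
    qed
    finally show ?thesis .
  qed
  have colk: "\<And>i. Q$i$k = P$i$k" using key[of _ k] wk by simp
  have a1: "j1 \<noteq> k" "(j1,k) \<in> E\<^sup>+" and a2: "j2 \<noteq> k" "(j2,k) \<in> E\<^sup>+"
    using j1 j2 by (auto simp: ancestors_def)
  have Pk1: "P$j1$k = 0"
  proof (rule ccontr)
    assume "P$j1$k \<noteq> 0"
    then have "(k,j1) \<in> E\<^sup>*" using inv0(2) by blast
    then show False using a1 ac by (meson trancl_rtrancl_trancl)
  qed
  have Pk2: "P$j2$k = 0"
  proof (rule ccontr)
    assume "P$j2$k \<noteq> 0"
    then have "(k,j2) \<in> E\<^sup>*" using inv0(2) by blast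
    then show False using a2 ac by (meson trancl_rtrancl_trancl)
  qed
  have md: "\<And>i j. (Q ** D) $ i $ j = Q $ i $ j * D $ j $ j" by (rule mul_diag[OF assms(2)])
  have dk1: "1 - D$k$k \<noteq> 0" using assms(4) by auto
  show "(\<exists>\<alpha>::real. \<forall>i.
          matrix_inv (mat 1 - Lam0 E \<theta>) $ i $ j1
            - (matrix_inv (mat 1 - Lamk E perfect k \<theta>) ** D) $ i $ j2
        = \<alpha> * (matrix_inv (mat 1 - Lam0 E \<theta>) $ i $ k
            - (matrix_inv (mat 1 - Lamk E perfect k \<theta>) ** D) $ i $ k))
      \<longleftrightarrow> (j1 = j2 \<and> D $ j1 $ j1 = 1)"
    unfolding P_def[symmetric, unfolded L0_def] Q_def[symmetric, unfolded Lk_def] md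
  proof
    assume "\<exists>\<alpha>. \<forall>i. P $ i $ j1 - Q $ i $ j2 * D $ j2 $ j2 = \<alpha> * (P $ i $ k - Q $ i $ k * D $ k $ k)"
    then obtain \<alpha> where h: "\<And>i. P $ i $ j1 - Q $ i $ j2 * D $ j2 $ j2 = \<alpha> * (P $ i $ k - Q $ i $ k * D $ k $ k)"
      by blast
    have e1: "Q $ j1 $ j2 * D $ j2 $ j2 = 1" using h[of j1] Pk1 colk[of j1] inv0(3)[of j1] by simp
    show "j1 = j2 \<and> D $ j1 $ j1 = 1"
    proof (cases "j1 = j2")
      case True
      then show ?thesis using e1 invk(3)[of j1] by simp
    next
      case False
      have "Q $ j1 $ j2 \<noteq> 0" using e1 by auto
      then have "(j2,j1) \<in> E\<^sup>*" using invk(2) by blast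
      then have t1: "(j2,j1) \<in> E\<^sup>+" using False by (metis rtrancl_eq_or_trancl)
      have d2: "D $ j2 $ j2 \<noteq> 0" using assms(3) a2(1) by force
      have "P $ j2 $ j1 = D $ j2 $ j2" using h[of j2] Pk2 colk[of j2] invk(3)[of j2] by simp
      then have "P $ j2 $ j1 \<noteq> 0" using d2 by simp
      then have "(j1,j2) \<in> E\<^sup>*" using inv0(2) by blast
      then have "(j2,j2) \<in> E\<^sup>+" using t1 by (meson trancl_rtrancl_trancl)
      then show ?thesis using ac by blast
    qed
  next
    assume "j1 = j2 \<and> D $ j1 $ j1 = 1"
    then have eq: "j2 = j1" "D $ j1 $ j1 = 1" by auto
    show "\<exists>\<alpha>. \<forall>i. P $ i $ j1 - Q $ i $ j2 * D $ j2 $ j2 = \<alpha> * (P $ i $ k - Q $ i $ k * D $ k $ k)"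
    proof (intro exI allI)
      fix i
      have "P $ i $ j1 - Q $ i $ j2 * D $ j2 $ j2 = P$i$k * w j1" using eq key[of i j1] by simp
      also have "\<dots> = (w j1 / (1 - D$k$k)) * (P $ i $ k - Q $ i $ k * D $ k $ k)"
        using dk1 colk[of i] by (simp add: field_simps)
      finally show "P $ i $ j1 - Q $ i $ j2 * D $ j2 $ j2 = (w j1 / (1 - D$k$k)) * (P $ i $ k - Q $ i $ k * D $ k $ k)" .
    qed
  qed
qed

end
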